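(* Let $\mathbf{x}_r=(\mathbf{p}_r,\mathbf{n}_r)$ and $\mathbf{x}_i=(\mathbf{p}_i,\mathbf{n}_i)$ be oriented points in $\mathbb{R}^3\times\mathbb{R}^3$ with unit normals $\|\mathbf{n}_r\|=\|\mathbf{n}_i\|=1$ and $\mathbf{p}_r\neq\mathbf{p}_i$, and likewise let $\mathbf{x}_r'=(\mathbf{p}_r',\mathbf{n}_r')$, $\mathbf{x}_i'=(\mathbf{p}_i',\mathbf{n}_i')$ be oriented points with unit normals and $\mathbf{p}_r'\neq\mathbf{p}_i'$. Suppose the two pairs share the same reference point and reference normal, $\mathbf{p}_r=\mathbf{p}_r'=\mathbf{0}$ and $\mathbf{n}_r=\mathbf{n}_r'$. Then $\mathbf{f}(\mathbf{x}_r,\mathbf{x}_i)=\mathbf{f}(\mathbf{x}_r',\mathbf{x}_i')$ if and only if there exists an orthogonal matrix $\mathbf{Q}\in O(3)$ with $\mathbf{Q}\mathbf{n}_r=\mathbf{n}_r$, $\mathbf{Q}\mathbf{n}_i=\mathbf{n}_i'$ and $\mathbf{Q}\mathbf{p}_i=\mathbf{p}_i'$; that is, the point pair feature determines the oriented pair up to a rotation about, or a reflection in a plane containing, the axis spanned by the reference normal $\mathbf{n}_r$.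
   Context: For oriented points $\mathbf{x}_r=(\mathbf{p}_r,\mathbf{n}_r)$, $\mathbf{x}_i=(\mathbf{p}_i,\mathbf{n}_i)$ with $\mathbf{p}_r\ne\mathbf{p}_i$, the point pair feature is $\mathbf{f}(\mathbf{x}_r,\mathbf{x}_i)=(\angle(\mathbf{n}_r,\mathbf{d}),\angle(\mathbf{n}_i,\mathbf{d}),\angle(\mathbf{n}_r,\mathbf{n}_i),\|\mathbf{d}\|_2)\in\mathbb{R}^4$, where $\mathbf{d}=\mathbf{p}_r-\mathbf{p}_i$ and $\angle(\mathbf{u},\mathbf{v})\in[0,\pi]$ denotes the unsigned angle between nonzero vectors $\mathbf{u},\mathbf{v}$. *)

theory Defs
  imports "HOL-Analysis.Analysis"
begin

definition vec_angle :: "real^3 \<Rightarrow> real^3 \<Rightarrow> real" where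
  "vec_angle u v = arccos ((u \<bullet> v) / (norm u * norm v))"

definition ppf :: "(real^3) \<times> (real^3) \<Rightarrow> (real^3) \<times> (real^3) \<Rightarrow> real \<times> real \<times> real \<times> real" where
  "ppf xr xi = (let (pr, nr) = xr; (pi, ni) = xi; d = pr - pi in
     (vec_angle nr d, vec_angle ni d, vec_angle nr ni, norm d))"

end

theory Submission
  imports Defs
begin

lemma cosq_bound: "\<bar>(u \<bullet> v) / (norm u * norm v)\<bar> \<le> (1::real)"
proof (cases "norm u * norm v = 0")
  case True then show ?thesis by (simp only: True div_by_0)
next
  case False
  have "norm u * norm v > 0" using False by (simp add: less_le)
  moreover have "\<bar>u \<bullet> v\<bar> \<le> norm u * norm v" by (rule Cauchy_Schwarz_ineq2)
  ultimately show ?thesis by (simp add: abs_divide)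
qed

lemma vec_angle_eq:
  assumes "vec_angle u v = vec_angle u' v'"
  shows "(u \<bullet> v) / (norm u * norm v) = (u' \<bullet> v') / (norm u' * norm v')"
  using assms unfolding vec_angle_def using arccos_eq_iff cosq_bound by blast

definition refl :: "real^3 \<Rightarrow> real^3 \<Rightarrow> real^3" where
  "refl u x = x - (2 * (u \<bullet> x) / (u \<bullet> u)) *\<^sub>R u"

lemma refl_orth: "orthogonal_transformation (refl u)"
  unfolding orthogonal_transformation_def
proof (intro conjI allI)
  show "linear (refl u)"
    by (rule linearI) (simp_all add: refl_def inner_add_right scaleR_add_left add_divide_distrib algebra_simps)
next
  fix v w
  show "refl u v \<bullet> refl u w = v \<bullet> w"
  proof (cases "u \<bullet> u = 0")
    case True then show ?thesis by (simp add: refl_def)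
  next
    case False
    then show ?thesis unfolding refl_def
      by (simp add: inner_diff_left inner_diff_right inner_commute field_simps)
  qed
qed

lemma refl_fix: "u \<bullet> v = 0 \<Longrightarrow> refl u v = v"
  by (simp add: refl_def)

lemma refl_map:
  assumes "norm a = norm b"
  shows "refl (a - b) a = b"
proof (cases "a = b")
  case True then show ?thesis by (simp add: refl_def)
next
  case False
  have aa: "a \<bullet> a = b \<bullet> b" using assms by (simp add: dot_square_norm)
  have uu: "(a - b) \<bullet> (a - b) = 2 * ((a - b) \<bullet> a)"
    using aa by (simp add: inner_diff_left inner_diff_right inner_commute)
  have nz: "(a - b) \<bullet> (a - b) \<noteq> 0" using False by simp
  then have "(a - b) \<bullet> a \<noteq> 0" using uu by auto
  then have k: "2 * ((a - b) \<bullet> a) / ((a - b) \<bullet> (a - b)) = 1" using uu by simp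
  show ?thesis unfolding refl_def k by simp
qed

theorem proposition1:
  fixes pr pi nr ni pr' pi' nr' ni' :: "real^3"
  assumes "norm nr = 1" and "norm ni = 1" and "pr \<noteq> pi"
    and "norm nr' = 1" and "norm ni' = 1" and "pr' \<noteq> pi'"
    and "pr = 0" and "pr' = 0" and "nr = nr'"
  shows "ppf (pr, nr) (pi, ni) = ppf (pr', nr') (pi', ni') \<longleftrightarrow>
    (\<exists>Q :: real^3^3. orthogonal_matrix Q \<and> Q *v nr = nr \<and> Q *v ni = ni' \<and> Q *v pi = pi')"
proof
  assume H: "ppf (pr, nr) (pi, ni) = ppf (pr', nr') (pi', ni')"
  have pi0: "pi \<noteq> 0" "pi' \<noteq> 0" using assms by auto
  have E: "vec_angle nr (-pi) = vec_angle nr (-pi')" "vec_angle ni (-pi) = vec_angle ni' (-pi')"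
     "vec_angle nr ni = vec_angle nr ni'" "norm pi = norm pi'"
    using H assms by (simp_all add: ppf_def Let_def)
  have e1: "nr \<bullet> pi = nr \<bullet> pi'"
    using vec_angle_eq[OF E(1)] E(4) pi0 assms by (simp add: divide_cancel_right)
  have e2: "ni \<bullet> pi = ni' \<bullet> pi'"
    using vec_angle_eq[OF E(2)] E(4) pi0 assms by (simp add: divide_cancel_right)
  have e3: "nr \<bullet> ni = nr \<bullet> ni'"
    using vec_angle_eq[OF E(3)] assms by simp
  define f1 where "f1 = refl (ni - ni')"
  have f1n: "f1 nr = nr" unfolding f1_def
    by (rule refl_fix) (metis e3 inner_commute inner_diff_right right_minus_eq)
  have f1i: "f1 ni = ni'" unfolding f1_def by (rule refl_map) (simp add: assms)
  have o1: "orthogonal_transformation f1" unfolding f1_def by (rule refl_orth)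
  define p1 where "p1 = f1 pi"
  have p1a: "nr \<bullet> p1 = nr \<bullet> pi'" using o1 f1n e1 unfolding p1_def
    by (metis orthogonal_transformation_def)
  have p1b: "ni' \<bullet> p1 = ni' \<bullet> pi'" using o1 f1i e2 unfolding p1_def
    by (metis orthogonal_transformation_def)
  have p1c: "norm p1 = norm pi'" using o1 E(4) unfolding p1_def
    by (simp add: orthogonal_transformation_norm)
  define f2 where "f2 = refl (p1 - pi')"
  have o2: "orthogonal_transformation f2" unfolding f2_def by (rule refl_orth)
  have f2n: "f2 nr = nr" unfolding f2_def
    by (rule refl_fix) (metis p1a inner_commute inner_diff_right right_minus_eq)
  have f2i: "f2 ni' = ni'" unfolding f2_def
    by (rule refl_fix) (metis p1b inner_commute inner_diff_right right_minus_eq)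
  have f2p: "f2 p1 = pi'" unfolding f2_def by (rule refl_map) (rule p1c)
  define f where "f = f2 \<circ> f1"
  have o: "orthogonal_transformation f" unfolding f_def
    using o1 o2 by (simp add: orthogonal_transformation_compose)
  then have lf: "linear f" and om: "orthogonal_matrix (matrix f)"
    using orthogonal_transformation_matrix by blast+
  have mw: "\<And>x. matrix f *v x = f x" using lf matrix_works
    by (metis linear_def scalar_mult_eq_scaleR)
  show "\<exists>Q :: real^3^3. orthogonal_matrix Q \<and> Q *v nr = nr \<and> Q *v ni = ni' \<and> Q *v pi = pi'"
    by (rule exI[of _ "matrix f"]) (simp add: om mw, simp add: f_def f1n f2n f1i f2i f2p[unfolded p1_def])
next
  assume "\<exists>Q :: real^3^3. orthogonal_matrix Q \<and> Q *v nr = nr \<and> Q *v ni = ni' \<and> Q *v pi = pi'"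
  then obtain Q :: "real^3^3" where Q: "orthogonal_matrix Q" "Q *v nr = nr" "Q *v ni = ni'" "Q *v pi = pi'"
    by blast
  have o: "orthogonal_transformation ((*v) Q)"
    using Q(1) by (simp add: orthogonal_transformation_matrix matrix_vector_mul_linear matrix_of_matrix_vector_mul)
  have ip: "\<And>v w. (Q *v v) \<bullet> (Q *v w) = v \<bullet> w" using o by (simp add: orthogonal_transformation_def)
  have nm: "\<And>v. norm (Q *v v) = norm v" using o by (simp add: orthogonal_transformation_norm)
  have a: "nr \<bullet> pi' = nr \<bullet> pi" using ip[of nr pi] Q by simp
  have b: "ni' \<bullet> pi' = ni \<bullet> pi" using ip[of ni pi] Q by simp
  have c: "nr \<bullet> ni' = nr \<bullet> ni" using ip[of nr ni] Q by simp
  have d: "norm pi' = norm pi" using nm[of pi] Q by simp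
  show "ppf (pr, nr) (pi, ni) = ppf (pr', nr') (pi', ni')"
    using assms a b c d by (simp add: ppf_def Let_def vec_angle_def)
qed

end
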